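(* Let $\xi_1,\dots,\xi_n$ be i.i.d. with law $P$ on $\mathcal Z$, $w_1,\dots,w_n\in[0,1]$ with $\|\mathbf w\|_1=\sum_iw_i>0$. Let $\mathcal F$ be a countable collection of measurable functions $\mathcal Z\to[0,1]$, $f_0:\mathcal Z\to[0,1]$ measurable, and $\sigma>0$ with $P[|f-f_0|]\le\sigma^2$ for all $f\in\mathcal F$. Set $\varphi(\sigma)=\int_0^\sigma(\log N_\infty(\mathcal F,\epsilon^2))^{1/2}d\epsilon$. If $4\varphi(\sigma)\le\sigma^2\sqrt{\|\mathbf w\|_1}$, then $$\sqrt{\|\mathbf w\|_1}\max\Big(\mathbb E\big[\sup_{f\in\mathcal F}v_{\mathbf w}(f_0-f)\big],\ \mathbb E\big[\sup_{f\in\mathcal F}v_{\mathbf w}(f-f_0)\big]\Big)\le12\varphi(\sigma).$$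
   Context: For a $P$-integrable $f$, $v_{\mathbf w}(f)=\frac1{\|\mathbf w\|_1}\sum_{i=1}^nw_if(\xi_i)-P(f)$. $N_\infty(\mathcal F,\epsilon)$ is the minimal number of sup-norm balls of radius $\epsilon$ centered in $\mathcal F$ needed to cover $\mathcal F$. *)

theory Defs
  imports "HOL-Probability.Probability"
begin

text \<open>It is \<infinity> if no finite cover exists.\<close>
definition sup_cover_num :: "'a measure \<Rightarrow> ('a \<Rightarrow> real) set \<Rightarrow> real \<Rightarrow> enat" where
  "sup_cover_num P F eps =
     (INF C \<in> {C. finite C \<and> C \<subseteq> F \<and>
                 (\<forall>f\<in>F. \<exists>g\<in>C. \<forall>z\<in>space P. \<bar>f z - g z\<bar> \<le> eps)}. enat (card C))"

definition sqrt_log_cover :: "'a measure \<Rightarrow> ('a \<Rightarrow> real) set \<Rightarrow> real \<Rightarrow> ennreal" where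
  "sqrt_log_cover P F eps =
     (case sup_cover_num P F eps of enat k \<Rightarrow> ennreal (sqrt (ln (real k))) | \<infinity> \<Rightarrow> \<infinity>)"

definition entropy_integral :: "'a measure \<Rightarrow> ('a \<Rightarrow> real) set \<Rightarrow> real \<Rightarrow> ennreal" where
  "entropy_integral P F \<sigma> =
     (\<integral>\<^sup>+ eps. indicator {0..\<sigma>} eps * sqrt_log_cover P F (eps\<^sup>2) \<partial>lborel)"

definition v_w :: "'a measure \<Rightarrow> nat \<Rightarrow> (nat \<Rightarrow> real) \<Rightarrow> (nat \<Rightarrow> 'b \<Rightarrow> 'a)
                     \<Rightarrow> ('a \<Rightarrow> real) \<Rightarrow> 'b \<Rightarrow> real" where
  "v_w P n w \<xi> g \<omega> =
     (\<Sum>i<n. w i * g (\<xi> i \<omega>)) / (\<Sum>i<n. w i) - (\<integral>z. g z \<partial>P)"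

end

theory Submission
  imports Defs
begin


lemma exp_le_quad:
  fixes x :: real
  assumes "\<bar>x\<bar> \<le> 1"
  shows "exp x \<le> 1 + x + x\<^sup>2"
proof (cases "x \<ge> 0")
  case True
  then show ?thesis using exp_bound[of x] assms by auto
next
  case False
  have e: "1 - x \<le> exp (-x)" using exp_ge_add_one_self[of "-x"] by simp
  have pos: "1 - x > 0" using False by simp
  have "exp x = 1 / exp (-x)" by (simp add: exp_minus field_simps)
  also have "\<dots> \<le> 1 / (1 - x)" using e pos by (intro divide_left_mono) auto
  also have "\<dots> \<le> 1 + x + x\<^sup>2"
  proof -
    have eq: "(1 + x + x\<^sup>2) * (1 - x) = 1 - x * x\<^sup>2" by (simp add: algebra_simps power2_eq_square)
    have "x * x\<^sup>2 \<le> 0" using False by (simp add: mult_nonpos_nonneg)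
    hence "1 \<le> (1 + x + x\<^sup>2) * (1 - x)" using eq by linarith
    then show ?thesis using pos by (simp add: divide_simps)
  qed
  finally show ?thesis .
qed

lemma (in prob_space) max_ineq:
  fixes Z :: "'i \<Rightarrow> 'a \<Rightarrow> real"
  assumes fin: "finite J" and ne: "J \<noteq> {}"
    and meas: "\<And>j. j \<in> J \<Longrightarrow> Z j \<in> borel_measurable M"
    and bnd: "\<And>j \<omega>. j \<in> J \<Longrightarrow> \<omega> \<in> space M \<Longrightarrow> \<bar>Z j \<omega>\<bar> \<le> K"
    and lam: "l > 0"
    and mgf: "\<And>j. j \<in> J \<Longrightarrow> (\<integral>\<omega>. exp (l * Z j \<omega>) \<partial>M) \<le> exp (l\<^sup>2 * A)"
  shows "l * (\<integral>\<omega>. Max ((\<lambda>j. Z j \<omega>) ` J) \<partial>M) \<le> ln (card J) + l\<^sup>2 * A"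
proof -
  define c where "c = ln (card J) + l\<^sup>2 * A"
  have cardpos: "card J > 0" using fin ne by (simp add: card_gt_0_iff)
  have expc: "exp c = card J * exp (l\<^sup>2 * A)"
    using cardpos by (simp add: c_def exp_add)
  define m where "m = (\<lambda>\<omega>. Max ((\<lambda>j. Z j \<omega>) ` J))"
  have mmeas: "m \<in> borel_measurable M" unfolding m_def
    using fin meas by (intro borel_measurable_Max) auto
  have mbnd: "\<bar>m \<omega>\<bar> \<le> K" if "\<omega> \<in> space M" for \<omega>
  proof -
    have "m \<omega> \<in> (\<lambda>j. Z j \<omega>) ` J" unfolding m_def using fin ne by (intro Max_in) auto
    then obtain j where j: "j \<in> J" "m \<omega> = Z j \<omega>" by auto
    then show ?thesis using bnd[OF j(1) that] by simp
  qed
  have intm: "integrable M m"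
    by (rule integrable_const_bound[where B=K]) (use mbnd mmeas in auto)
  have expmeas: "(\<lambda>\<omega>. exp (l * Z j \<omega>)) \<in> borel_measurable M" if "j \<in> J" for j
    using meas[OF that] by measurable
  have intexp: "integrable M (\<lambda>\<omega>. exp (l * Z j \<omega>))" if j: "j \<in> J" for j
  proof (rule integrable_const_bound[where B="exp (l * K)"])
    show "AE x in M. norm (exp (l * Z j x)) \<le> exp (l * K)"
      using bnd[OF j] lam by (intro AE_I2) (auto intro!: mult_left_mono simp: abs_le_iff)
  qed (use expmeas[OF j] in auto)
  have pt: "l * m \<omega> - c \<le> (\<Sum>j\<in>J. exp (l * Z j \<omega>)) / exp c - 1" if "\<omega> \<in> space M" for \<omega>
  proof -
    have "m \<omega> \<in> (\<lambda>j. Z j \<omega>) ` J" unfolding m_def using fin ne by (intro Max_in) auto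
    then obtain j0 where j0: "j0 \<in> J" "m \<omega> = Z j0 \<omega>" by auto
    have "l * m \<omega> - c \<le> exp (l * m \<omega> - c) - 1"
      using exp_ge_add_one_self[of "l * m \<omega> - c"] by linarith
    also have "exp (l * m \<omega> - c) = exp (l * Z j0 \<omega>) / exp c" using j0 by (simp add: exp_diff)
    also have "exp (l * Z j0 \<omega>) \<le> (\<Sum>j\<in>J. exp (l * Z j \<omega>))"
      by (rule member_le_sum) (use j0 fin in auto)
    hence "exp (l * Z j0 \<omega>) / exp c \<le> (\<Sum>j\<in>J. exp (l * Z j \<omega>)) / exp c"
      by (simp add: divide_right_mono)
    finally show ?thesis by simp
  qed
  have "l * (\<integral>\<omega>. m \<omega> \<partial>M) - c = (\<integral>\<omega>. (l * m \<omega> - c) \<partial>M)"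
    using intm by (simp add: prob_space)
  also have "\<dots> \<le> (\<integral>\<omega>. ((\<Sum>j\<in>J. exp (l * Z j \<omega>)) / exp c - 1) \<partial>M)"
    by (rule integral_mono) (use intm intexp pt in auto)
  also have "\<dots> = (\<Sum>j\<in>J. (\<integral>\<omega>. exp (l * Z j \<omega>) \<partial>M)) / exp c - 1"
    using intexp by (simp add: prob_space)
  also have "\<dots> \<le> (\<Sum>j\<in>J. exp (l\<^sup>2 * A)) / exp c - 1"
    using mgf by (intro diff_right_mono divide_right_mono sum_mono) auto
  also have "\<dots> = 0" using expc cardpos by simp
  finally show ?thesis unfolding m_def c_def by simp
qed




lemma (in prob_space) max_ineq2:
  fixes Z :: "'i \<Rightarrow> 'a \<Rightarrow> real"
  assumes fin: "finite J" and ne: "J \<noteq> {}"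
    and meas: "\<And>j. j \<in> J \<Longrightarrow> Z j \<in> borel_measurable M"
    and bnd: "\<And>j \<omega>. j \<in> J \<Longrightarrow> \<omega> \<in> space M \<Longrightarrow> \<bar>Z j \<omega>\<bar> \<le> K"
    and Apos: "A > 0" and Lpos: "\<Lambda> > 0"
    and range: "sqrt (ln (card J) / A) \<le> \<Lambda>"
    and mgf: "\<And>l j. 0 < l \<Longrightarrow> l \<le> \<Lambda> \<Longrightarrow> j \<in> J \<Longrightarrow> (\<integral>\<omega>. exp (l * Z j \<omega>) \<partial>M) \<le> exp (l\<^sup>2 * A)"
  shows "(\<integral>\<omega>. Max ((\<lambda>j. Z j \<omega>) ` J) \<partial>M) \<le> 2 * sqrt (ln (card J) * A)"
proof -
  define L where "L = ln (real (card J))"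
  define E where "E = (\<integral>\<omega>. Max ((\<lambda>j. Z j \<omega>) ` J) \<partial>M)"
  have cardpos: "card J \<ge> 1" using fin ne by (simp add: Suc_le_eq card_gt_0_iff)
  have L0: "L \<ge> 0" unfolding L_def using cardpos by simp
  have key: "l * E \<le> L + l\<^sup>2 * A" if "0 < l" "l \<le> \<Lambda>" for l
    unfolding E_def L_def by (rule max_ineq[OF fin ne meas bnd that(1)]) (use mgf that in auto)
  show ?thesis
  proof (cases "L = 0")
    case True
    have "E \<le> 0"
    proof (rule ccontr)
      assume "\<not> E \<le> 0"
      hence Ep: "E > 0" by simp
      define l where "l = min \<Lambda> (E / (2 * A))"
      have lp: "l > 0" using Lpos Ep Apos by (simp add: l_def)
      have "l * E \<le> l * (l * A)" using key[OF lp] True by (simp add: l_def power2_eq_square algebra_simps)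
      hence "E \<le> l * A" using lp by simp
      also have "l * A \<le> E / 2" using Apos by (simp add: l_def min_def field_simps)
      finally show False using Ep by simp
    qed
    then show ?thesis using True unfolding E_def L_def by simp
  next
    case False
    hence Lp: "L > 0" using L0 by simp
    define l where "l = sqrt (L / A)"
    have lp: "l > 0" using Lp Apos by (simp add: l_def)
    have l2: "l\<^sup>2 * A = L" using Lp Apos by (simp add: l_def)
    have "l * E \<le> 2 * L" using key[OF lp] range l2 unfolding l_def L_def by simp
    also have "2 * L = l * (2 * sqrt (L * A))"
    proof -
      have "l * sqrt (L * A) = sqrt (L / A * (L * A))" by (simp only: l_def real_sqrt_mult)
      also have "L / A * (L * A) = L\<^sup>2" using Apos by (simp add: power2_eq_square)
      also have "sqrt (L\<^sup>2) = L" using Lp by simp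
      finally have "l * sqrt (L * A) = L" .
      then show ?thesis by (simp add: algebra_simps)
    qed
    finally have "E \<le> 2 * sqrt (L * A)" using lp by simp
    then show ?thesis unfolding E_def L_def .
  qed
qed




lemma (in prob_space) bounded_integrable:
  fixes h :: "'a \<Rightarrow> real"
  assumes "h \<in> borel_measurable M" "\<And>z. z \<in> space M \<Longrightarrow> \<bar>h z\<bar> \<le> B"
  shows "integrable M h"
  by (rule integrable_const_bound[where B=B]) (use assms in auto)

lemma (in prob_space) abs_integral_le:
  fixes h :: "'a \<Rightarrow> real"
  assumes "h \<in> borel_measurable M" "\<And>z. z \<in> space M \<Longrightarrow> \<bar>h z\<bar> \<le> B"
  shows "\<bar>\<integral>z. h z \<partial>M\<bar> \<le> B"
proof -
  have "\<bar>\<integral>z. h z \<partial>M\<bar> \<le> (\<integral>z. \<bar>h z\<bar> \<partial>M)" by simp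
  also have "\<dots> \<le> (\<integral>z. B \<partial>M)"
    by (rule integral_mono) (use assms bounded_integrable[OF assms] in auto)
  also have "\<dots> = B" by (simp add: prob_space)
  finally show ?thesis .
qed

locale wsetup =
  fixes M :: "'b measure" and P :: "'a measure" and n :: nat and w :: "nat \<Rightarrow> real"
    and \<xi> :: "nat \<Rightarrow> 'b \<Rightarrow> 'a"
  assumes M: "prob_space M"
    and \<xi>_meas: "\<And>i. i < n \<Longrightarrow> \<xi> i \<in> measurable M P"
    and \<xi>_indep: "prob_space.indep_vars M (\<lambda>_. P) \<xi> {..<n}"
    and \<xi>_law: "\<And>i. i < n \<Longrightarrow> distr M P (\<xi> i) = P"
    and w01: "\<And>i. i < n \<Longrightarrow> 0 \<le> w i \<and> w i \<le> 1"
    and wpos: "(\<Sum>i<n. w i) > 0"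
begin

sublocale prob_space M by (rule M)

definition "W = (\<Sum>i<n. w i)"
definition "Zs h \<omega> = (\<Sum>i<n. w i * (h (\<xi> i \<omega>) - (\<integral>z. h z \<partial>P)))"

lemma Wpos: "W > 0" using wpos by (simp add: W_def)

lemma n_pos: "n > 0"
  using wpos by (cases n) auto

lemma P_prob: "prob_space P"
proof -
  have "prob_space (distr M P (\<xi> 0))" by (rule prob_space_distr) (use \<xi>_meas n_pos in auto)
  then show ?thesis using \<xi>_law n_pos by simp
qed

lemma Zs_meas:
  assumes "h \<in> borel_measurable P"
  shows "Zs h \<in> borel_measurable M"
proof -
  have "(\<lambda>\<omega>. w i * (h (\<xi> i \<omega>) - (\<integral>z. h z \<partial>P))) \<in> borel_measurable M" if "i \<in> {..<n}" for i
  proof -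
    have "(\<lambda>\<omega>. h (\<xi> i \<omega>)) \<in> borel_measurable M"
      using measurable_compose[OF \<xi>_meas assms] that by simp
    then show ?thesis by measurable
  qed
  then show ?thesis unfolding Zs_def by (rule borel_measurable_sum)
qed

lemma Zs_bnd:
  assumes "h \<in> borel_measurable P" "\<And>z. z \<in> space P \<Longrightarrow> \<bar>h z\<bar> \<le> B" "\<omega> \<in> space M"
  shows "\<bar>Zs h \<omega>\<bar> \<le> 2 * B * W"
proof -
  interpret P: prob_space P by (rule P_prob)
  have mb: "\<bar>\<integral>z. h z \<partial>P\<bar> \<le> B" by (rule P.abs_integral_le) (use assms in auto)
  have "\<bar>Zs h \<omega>\<bar> \<le> (\<Sum>i<n. \<bar>w i * (h (\<xi> i \<omega>) - (\<integral>z. h z \<partial>P))\<bar>)"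
    unfolding Zs_def by (rule sum_abs)
  also have "\<dots> \<le> (\<Sum>i<n. w i * (2 * B))"
  proof (rule sum_mono)
    fix i assume i: "i \<in> {..<n}"
    have xi: "\<xi> i \<omega> \<in> space P" using \<xi>_meas[of i] i assms(3) by (auto simp: measurable_def)
    have "\<bar>h (\<xi> i \<omega>) - (\<integral>z. h z \<partial>P)\<bar> \<le> 2 * B" using assms(2)[OF xi] mb by linarith
    then show "\<bar>w i * (h (\<xi> i \<omega>) - (\<integral>z. h z \<partial>P))\<bar> \<le> w i * (2 * B)"
      using w01[of i] i by (simp add: abs_mult mult_left_mono)
  qed
  also have "\<dots> = 2 * B * W" unfolding W_def sum_distrib_right[symmetric] by (simp add: mult_ac)
  finally show ?thesis .
qed

lemma Zs_add:
  assumes "integrable P h1" "integrable P h2"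
  shows "Zs (\<lambda>z. h1 z + h2 z) \<omega> = Zs h1 \<omega> + Zs h2 \<omega>"
  unfolding Zs_def using assms by (simp add: sum.distrib[symmetric] algebra_simps)

lemma v_eq: "v_w P n w \<xi> h \<omega> = Zs h \<omega> / W"
proof -
  have "Zs h \<omega> = (\<Sum>i<n. w i * h (\<xi> i \<omega>)) - W * (\<integral>z. h z \<partial>P)"
    unfolding Zs_def W_def by (simp add: right_diff_distrib sum_subtractf sum_distrib_right)
  then show ?thesis using Wpos unfolding v_w_def W_def by (simp add: field_simps)
qed

lemma Zs_mgf:
  assumes hm: "h \<in> borel_measurable P" and hb: "\<And>z. z \<in> space P \<Longrightarrow> \<bar>h z\<bar> \<le> B"
    and per: "\<And>i. i < n \<Longrightarrow> (\<integral>\<^sup>+z. ennreal (exp (l * (w i * (h z - (\<integral>z. h z \<partial>P))))) \<partial>P) \<le> ennreal (exp (c i))"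
  shows "(\<integral>\<omega>. exp (l * Zs h \<omega>) \<partial>M) \<le> exp (\<Sum>i<n. c i)"
proof -
  define m where "m = (\<integral>z. h z \<partial>P)"
  define Y where "Y = (\<lambda>i z. ennreal (exp (l * (w i * (h z - m)))))"
  have Ymeas: "Y i \<in> borel_measurable P" for i unfolding Y_def using hm by measurable
  have emeas: "(\<lambda>\<omega>. exp (l * Zs h \<omega>)) \<in> borel_measurable M" using Zs_meas[OF hm] by measurable
  have eint: "integrable M (\<lambda>\<omega>. exp (l * Zs h \<omega>))"
  proof (rule integrable_const_bound[where B="exp (\<bar>l\<bar> * (2 * B * W))"])
    show "AE x in M. norm (exp (l * Zs h x)) \<le> exp (\<bar>l\<bar> * (2 * B * W))"
    proof (rule AE_I2)
      fix x assume x: "x \<in> space M"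
      have "l * Zs h x \<le> \<bar>l\<bar> * \<bar>Zs h x\<bar>" by (simp add: abs_mult[symmetric])
      also have "\<dots> \<le> \<bar>l\<bar> * (2 * B * W)" using Zs_bnd[OF hm hb x] by (intro mult_left_mono) auto
      finally show "norm (exp (l * Zs h x)) \<le> exp (\<bar>l\<bar> * (2 * B * W))" by simp
    qed
  qed (rule emeas)
  have "ennreal (\<integral>\<omega>. exp (l * Zs h \<omega>) \<partial>M) = (\<integral>\<^sup>+\<omega>. exp (l * Zs h \<omega>) \<partial>M)"
    by (rule nn_integral_eq_integral[symmetric]) (use eint in auto)
  also have "\<dots> = (\<integral>\<^sup>+\<omega>. (\<Prod>i\<in>{..<n}. Y i (\<xi> i \<omega>)) \<partial>M)"
    by (intro nn_integral_cong)
       (simp add: Y_def m_def Zs_def sum_distrib_left exp_sum prod_ennreal)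
  also have "\<dots> = (\<Prod>i\<in>{..<n}. \<integral>\<^sup>+\<omega>. Y i (\<xi> i \<omega>) \<partial>M)"
  proof (rule indep_vars_nn_integral)
    show "indep_vars (\<lambda>_. borel) (\<lambda>i \<omega>. Y i (\<xi> i \<omega>)) {..<n}"
      by (rule indep_vars_compose2[OF \<xi>_indep]) (use Ymeas in auto)
  qed auto
  also have "\<dots> = (\<Prod>i\<in>{..<n}. \<integral>\<^sup>+z. Y i z \<partial>P)"
  proof (rule prod.cong)
    fix i assume i: "i \<in> {..<n}"
    have "(\<integral>\<^sup>+z. Y i z \<partial>distr M P (\<xi> i)) = (\<integral>\<^sup>+\<omega>. Y i (\<xi> i \<omega>) \<partial>M)"
      by (rule nn_integral_distr) (use \<xi>_meas i Ymeas in auto)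
    then show "(\<integral>\<^sup>+\<omega>. Y i (\<xi> i \<omega>) \<partial>M) = (\<integral>\<^sup>+z. Y i z \<partial>P)" using \<xi>_law i by simp
  qed simp
  also have "\<dots> \<le> (\<Prod>i\<in>{..<n}. ennreal (exp (c i)))"
    by (rule prod_mono_ennreal) (use per in \<open>auto simp: Y_def m_def\<close>)
  also have "\<dots> = ennreal (exp (\<Sum>i<n. c i))"
    by (simp add: prod_ennreal exp_sum)
  finally show ?thesis by (simp add: ennreal_le_iff2)
qed

end




lemma (in prob_space) hoeff_i:
  fixes h :: "'a \<Rightarrow> real"
  assumes hm: "h \<in> borel_measurable M" and hb: "\<And>z. z \<in> space M \<Longrightarrow> \<bar>h z\<bar> \<le> b"
    and w: "0 \<le> wi" "wi \<le> 1" and l: "l > 0"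
  shows "(\<integral>\<^sup>+z. ennreal (exp (l * (wi * (h z - (\<integral>z. h z \<partial>M))))) \<partial>M) \<le> ennreal (exp (l\<^sup>2 * wi * b\<^sup>2 / 2))"
proof -
  interpret I: interval_bounded_random_variable M "\<lambda>z. wi * h z" "-(wi * b)" "wi * b"
  proof unfold_locales
    show "random_variable borel (\<lambda>z. wi * h z)" using hm by measurable
    show "AE x in M. wi * h x \<in> {- (wi * b)..wi * b}"
    proof (rule AE_I2)
      fix x assume x: "x \<in> space M"
      have "\<bar>wi * h x\<bar> \<le> wi * b" using hb[OF x] w by (simp add: abs_mult mult_left_mono)
      then show "wi * h x \<in> {- (wi * b)..wi * b}" by (auto simp: abs_le_iff)
    qed
  qed
  have H: "(\<integral>\<^sup>+x. ennreal (exp (l * (wi * h x - expectation (\<lambda>z. wi * h z)))) \<partial>M)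
      \<le> ennreal (exp (l\<^sup>2 * (wi * b - - (wi * b))\<^sup>2 / 8))"
    by (rule I.Hoeffdings_lemma_nn_integral[OF l])
  have e: "expectation (\<lambda>z. wi * h z) = wi * (\<integral>z. h z \<partial>M)" by simp
  have "(\<integral>\<^sup>+z. ennreal (exp (l * (wi * (h z - (\<integral>z. h z \<partial>M))))) \<partial>M)
      = (\<integral>\<^sup>+x. ennreal (exp (l * (wi * h x - expectation (\<lambda>z. wi * h z)))) \<partial>M)"
    unfolding e by (simp add: right_diff_distrib)
  also have "\<dots> \<le> ennreal (exp (l\<^sup>2 * (wi * b - - (wi * b))\<^sup>2 / 8))" by (rule H)
  also have "\<dots> \<le> ennreal (exp (l\<^sup>2 * wi * b\<^sup>2 / 2))"
  proof (intro ennreal_leI exp_mono)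
    have "l\<^sup>2 * (wi * b - - (wi * b))\<^sup>2 / 8 = l\<^sup>2 * b\<^sup>2 * wi\<^sup>2 / 2" by (simp add: power2_eq_square algebra_simps)
    also have "\<dots> \<le> l\<^sup>2 * b\<^sup>2 * wi / 2"
      using w by (intro divide_right_mono mult_left_mono) (auto simp: power2_eq_square mult_left_le)
    finally show "l\<^sup>2 * (wi * b - - (wi * b))\<^sup>2 / 8 \<le> l\<^sup>2 * wi * b\<^sup>2 / 2" by (simp add: mult_ac)
  qed
  finally show ?thesis .
qed

lemma (in prob_space) quad_i:
  fixes h :: "'a \<Rightarrow> real" and V l wi :: real
  assumes hm: "h \<in> borel_measurable M" and hb: "\<And>z. z \<in> space M \<Longrightarrow> \<bar>h z\<bar> \<le> 1"
    and h2: "(\<integral>z. (h z)\<^sup>2 \<partial>M) \<le> V"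
    and w: "0 \<le> wi" "wi \<le> 1" and l: "0 < l" "l \<le> 1"
  shows "(\<integral>\<^sup>+z. ennreal (exp (l * (wi * (h z - (\<integral>z. h z \<partial>M))))) \<partial>M) \<le> ennreal (exp (l\<^sup>2 * wi * V))"
proof -
  define m where "m = (\<integral>z. h z \<partial>M)"
  have hint: "integrable M h" by (rule bounded_integrable[OF hm hb])
  have h2int: "integrable M (\<lambda>z. (h z)\<^sup>2)"
    by (rule bounded_integrable[where B=1]) (use hm hb in \<open>auto simp: abs_square_le_1\<close>)
  have bx: "\<bar>l * wi * h z\<bar> \<le> 1" if "z \<in> space M" for z
  proof -
    have "\<bar>l * wi * h z\<bar> = l * wi * \<bar>h z\<bar>" using l w by (simp add: abs_mult)
    also have "\<dots> \<le> 1 * 1 * 1" using l w hb[OF that] by (intro mult_mono) auto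
    finally show ?thesis by simp
  qed
  have emeas: "(\<lambda>z. exp (l * wi * h z)) \<in> borel_measurable M" using hm by measurable
  have eint: "integrable M (\<lambda>z. exp (l * wi * h z))"
    by (rule bounded_integrable[where B="exp 1"]) (use emeas bx in \<open>auto simp: abs_le_iff\<close>)
  have qint: "integrable M (\<lambda>z. 1 + l * wi * h z + (l * wi * h z)\<^sup>2)"
    using hint h2int by (simp add: power_mult_distrib)
  have "(\<integral>z. exp (l * wi * h z) \<partial>M) \<le> (\<integral>z. 1 + l * wi * h z + (l * wi * h z)\<^sup>2 \<partial>M)"
    by (rule integral_mono[OF eint qint]) (use bx exp_le_quad in blast)
  also have "\<dots> = 1 + l * wi * m + (l * wi)\<^sup>2 * (\<integral>z. (h z)\<^sup>2 \<partial>M)"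
    using hint h2int by (simp add: m_def power_mult_distrib prob_space)
  also have "\<dots> \<le> 1 + l * wi * m + l\<^sup>2 * wi * V"
  proof -
    have "(l * wi)\<^sup>2 * (\<integral>z. (h z)\<^sup>2 \<partial>M) \<le> (l * wi)\<^sup>2 * V" using h2 by (intro mult_left_mono) auto
    also have "\<dots> \<le> l\<^sup>2 * wi * V"
    proof -
      have "0 \<le> (\<integral>z. (h z)\<^sup>2 \<partial>M)" by (intro integral_nonneg_AE) simp
      hence V0: "V \<ge> 0" using h2 by linarith
      have "wi\<^sup>2 \<le> wi" using w by (simp add: power2_eq_square mult_left_le)
      then show ?thesis using V0 by (simp add: power_mult_distrib mult_right_mono mult_left_mono)
    qed
    finally show ?thesis by simp
  qed
  also have "\<dots> \<le> exp (l * wi * m + l\<^sup>2 * wi * V)"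
    using exp_ge_add_one_self[of "l * wi * m + l\<^sup>2 * wi * V"] by linarith
  finally have A1: "(\<integral>z. exp (l * wi * h z) \<partial>M) \<le> exp (l * wi * m + l\<^sup>2 * wi * V)" .
  have eq: "(\<lambda>z. exp (l * (wi * (h z - m)))) = (\<lambda>z. exp (- (l * wi * m)) * exp (l * wi * h z))"
    by (rule ext) (simp add: algebra_simps flip: exp_add)
  have int2: "integrable M (\<lambda>z. exp (l * (wi * (h z - m))))"
    unfolding eq using eint by simp
  have "(\<integral>\<^sup>+z. ennreal (exp (l * (wi * (h z - m)))) \<partial>M) = ennreal (\<integral>z. exp (l * (wi * (h z - m))) \<partial>M)"
    by (rule nn_integral_eq_integral) (use int2 in auto)
  also have "(\<integral>z. exp (l * (wi * (h z - m))) \<partial>M) = exp (- (l * wi * m)) * (\<integral>z. exp (l * wi * h z) \<partial>M)"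
    unfolding eq by simp
  also have "\<dots> \<le> exp (- (l * wi * m)) * exp (l * wi * m + l\<^sup>2 * wi * V)"
    by (rule mult_left_mono[OF A1]) simp
  also have "\<dots> = exp (l\<^sup>2 * wi * V)" by (simp flip: exp_add)
  finally show ?thesis unfolding m_def by (simp add: ennreal_leI)
qed




definition "covs P F d = {C. finite C \<and> C \<subseteq> F \<and> (\<forall>f\<in>F. \<exists>g\<in>C. \<forall>z\<in>space P. \<bar>f z - g z\<bar> \<le> d)}"

lemma scn_eq: "sup_cover_num P F d = (INF C \<in> covs P F d. enat (card C))"
  unfolding sup_cover_num_def covs_def ..

lemma scn_anti:
  assumes "d \<le> d'"
  shows "sup_cover_num P F d' \<le> sup_cover_num P F d"
  unfolding scn_eq
proof (rule INF_superset_mono)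
  show "covs P F d \<subseteq> covs P F d'"
  proof
    fix C assume "C \<in> covs P F d"
    then have C: "finite C" "C \<subseteq> F" "\<And>f. f \<in> F \<Longrightarrow> \<exists>g\<in>C. \<forall>z\<in>space P. \<bar>f z - g z\<bar> \<le> d"
      unfolding covs_def by auto
    have "\<exists>g\<in>C. \<forall>z\<in>space P. \<bar>f z - g z\<bar> \<le> d'" if "f \<in> F" for f
      using C(3)[OF that] assms by (meson order_trans)
    then show "C \<in> covs P F d'" unfolding covs_def using C by auto
  qed
qed simp

lemma enat_Inf_in:
  fixes X :: "enat set"
  assumes "X \<noteq> {}"
  shows "Inf X \<in> X"
  using assms unfolding Inf_enat_def by (auto intro: LeastI)

lemma scn_attained:
  assumes "sup_cover_num P F d = enat k"
  shows "\<exists>C. finite C \<and> C \<subseteq> F \<and> (\<forall>f\<in>F. \<exists>g\<in>C. \<forall>z\<in>space P. \<bar>f z - g z\<bar> \<le> d) \<and> card C = k"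
proof -
  have ne: "covs P F d \<noteq> {}"
  proof
    assume "covs P F d = {}"
    then have "sup_cover_num P F d = \<infinity>" unfolding scn_eq by (simp add: top_enat_def)
    then show False using assms by simp
  qed
  have "Inf ((\<lambda>C. enat (card C)) ` covs P F d) \<in> (\<lambda>C. enat (card C)) ` covs P F d"
    by (rule enat_Inf_in) (use ne in auto)
  then obtain C where "C \<in> covs P F d" "enat (card C) = sup_cover_num P F d"
    unfolding scn_eq by auto
  then show ?thesis using assms unfolding covs_def by auto
qed

lemma slc_anti:
  assumes "d \<le> d'"
  shows "sqrt_log_cover P F d' \<le> sqrt_log_cover P F d"
proof (cases "sup_cover_num P F d")
  case (enat k)
  have "sup_cover_num P F d' \<le> enat k" using scn_anti[OF assms, of P F] enat by simp
  then obtain k' where k': "sup_cover_num P F d' = enat k'" "k' \<le> k"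
    by (cases "sup_cover_num P F d'") auto
  have "ln (real k') \<le> ln (real k)"
  proof (cases "k' = 0")
    case True
    then show ?thesis by (cases "k = 0") auto
  next
    case False
    then show ?thesis using k'(2) by simp
  qed
  then show ?thesis unfolding sqrt_log_cover_def using enat k' by (simp add: ennreal_leI)
next
  case infinity
  then show ?thesis unfolding sqrt_log_cover_def by simp
qed

lemma scn_finite:
  assumes fin: "entropy_integral P F \<sigma> < \<infinity>" and e: "0 < e" "e \<le> \<sigma>"
  shows "sup_cover_num P F (e\<^sup>2) \<noteq> \<infinity>"
proof
  assume inf: "sup_cover_num P F (e\<^sup>2) = \<infinity>"
  have "(\<integral>\<^sup>+ x. \<infinity> * indicator {0..e} x \<partial>lborel) \<le> entropy_integral P F \<sigma>"
    unfolding entropy_integral_def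
  proof (rule nn_integral_mono)
    fix x :: real
    show "\<infinity> * indicator {0..e} x \<le> indicator {0..\<sigma>} x * sqrt_log_cover P F (x\<^sup>2)"
    proof (cases "x \<in> {0..e}")
      case True
      then have "x\<^sup>2 \<le> e\<^sup>2" by (auto intro: power_mono)
      then have "sqrt_log_cover P F (e\<^sup>2) \<le> sqrt_log_cover P F (x\<^sup>2)" by (rule slc_anti)
      moreover have "sqrt_log_cover P F (e\<^sup>2) = \<infinity>" using inf unfolding sqrt_log_cover_def by simp
      ultimately show ?thesis using True e by (auto simp: top_unique)
    qed simp
  qed
  moreover have "(\<integral>\<^sup>+ x. \<infinity> * indicator {0..e} x \<partial>lborel) = \<infinity>"
    using e by (simp add: nn_integral_cmult_indicator ennreal_mult_top)
  ultimately show False using fin by (simp add: top_unique)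
qed

lemma entropy_sum:
  fixes r :: "nat \<Rightarrow> real"
  assumes fin: "entropy_integral P F \<sigma> < \<infinity>" and \<sigma>: "\<sigma> > 0"
    and r: "\<And>s. s < S \<Longrightarrow> sqrt_log_cover P F ((\<sigma> / 2 ^ s)\<^sup>2) = ennreal (r s)"
    and r0: "\<And>s. r s \<ge> 0"
  shows "(\<Sum>s<S. \<sigma> / 2 ^ Suc s * r s) \<le> enn2real (entropy_integral P F \<sigma>)"
proof -
  define e where "e = (\<lambda>s::nat. \<sigma> / 2 ^ s)"
  have epos: "e s > 0" for s using \<sigma> by (simp add: e_def)
  have eanti: "e t \<le> e s" if "s \<le> t" for s t
    using \<sigma> that unfolding e_def by (intro divide_left_mono power_increasing) auto
  have diff: "e s - e (Suc s) = \<sigma> / 2 ^ Suc s" for s by (simp add: e_def field_simps)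
  have dec: "e (Suc s) \<le> e s" for s using eanti by simp
  define I where "I = (\<lambda>s. {e (Suc s)<..e s})"
  have disj: "x \<notin> I t" if "x \<in> I s" "s \<noteq> t" for x s t
  proof
    assume xt: "x \<in> I t"
    show False
    proof (cases "s < t")
      case True
      then have "e t \<le> e (Suc s)" using eanti by simp
      then show False using that xt unfolding I_def by auto
    next
      case False
      then have "t < s" using that by simp
      then have "e s \<le> e (Suc t)" using eanti by simp
      then show False using that xt unfolding I_def by auto
    qed
  qed
  have "ennreal (\<Sum>s<S. \<sigma> / 2 ^ Suc s * r s) = (\<Sum>s<S. ennreal (\<sigma> / 2 ^ Suc s * r s))"
    by (rule sum_ennreal[symmetric]) (use r0 \<sigma> in auto)
  also have "\<dots> = (\<Sum>s<S. ennreal (r s) * emeasure lborel (I s))"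
  proof (rule sum.cong[OF refl])
    fix s
    have em: "emeasure lborel (I s) = ennreal (\<sigma> / 2 ^ Suc s)"
      unfolding I_def diff[symmetric] by (rule emeasure_lborel_Ioc[OF dec])
    show "ennreal (\<sigma> / 2 ^ Suc s * r s) = ennreal (r s) * emeasure lborel (I s)"
    proof -
      have eq: "\<sigma> / 2 ^ Suc s * r s = r s * (\<sigma> / 2 ^ Suc s)" by simp
      have "ennreal (\<sigma> / 2 ^ Suc s * r s) = ennreal (r s) * ennreal (\<sigma> / 2 ^ Suc s)"
        unfolding eq using r0[of s] \<sigma> by (intro ennreal_mult) auto
      then show ?thesis using em by simp
    qed
  qed
  also have "\<dots> = (\<Sum>s<S. \<integral>\<^sup>+ x. ennreal (r s) * indicator (I s) x \<partial>lborel)"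
    by (intro sum.cong refl nn_integral_cmult_indicator[symmetric]) (auto simp: I_def)
  also have "\<dots> = (\<integral>\<^sup>+ x. (\<Sum>s<S. ennreal (r s) * indicator (I s) x) \<partial>lborel)"
    by (rule nn_integral_sum[symmetric]) (auto simp: I_def)
  also have "\<dots> \<le> entropy_integral P F \<sigma>"
    unfolding entropy_integral_def
  proof (rule nn_integral_mono)
    fix x :: real
    show "(\<Sum>s<S. ennreal (r s) * indicator (I s) x) \<le> indicator {0..\<sigma>} x * sqrt_log_cover P F (x\<^sup>2)"
    proof (cases "\<exists>s0<S. x \<in> I s0")
      case True
      then obtain s0 where s0: "s0 < S" "x \<in> I s0" by auto
      have "(\<Sum>s<S. ennreal (r s) * indicator (I s) x) = ennreal (r s0) * indicator (I s0) x + (\<Sum>s\<in>{..<S} - {s0}. ennreal (r s) * indicator (I s) x)"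
        using s0 by (subst sum.remove[of _ s0]) auto
      also have "(\<Sum>s\<in>{..<S} - {s0}. ennreal (r s) * indicator (I s) x) = 0"
        by (rule sum.neutral) (use disj[OF s0(2)] in auto)
      also have "ennreal (r s0) * indicator (I s0) x = sqrt_log_cover P F ((e s0)\<^sup>2)"
        using s0 r[OF s0(1)] by (simp add: e_def)
      also have "\<dots> \<le> sqrt_log_cover P F (x\<^sup>2)"
      proof (rule slc_anti)
        have "0 < x" "x \<le> e s0" using s0(2) epos[of "Suc s0"] unfolding I_def by auto
        then show "x\<^sup>2 \<le> (e s0)\<^sup>2" by (intro power_mono) auto
      qed
      also have "\<dots> = indicator {0..\<sigma>} x * sqrt_log_cover P F (x\<^sup>2)"
      proof -
        have "e s0 \<le> \<sigma>" using eanti[of 0 s0] by (simp add: e_def)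
        then have "x \<in> {0..\<sigma>}" using s0(2) epos[of "Suc s0"] unfolding I_def by auto
        then show ?thesis by simp
      qed
      finally show ?thesis by simp
    next
      case False
      then have "(\<Sum>s<S. ennreal (r s) * indicator (I s) x) = 0" by (intro sum.neutral) auto
      then show ?thesis by simp
    qed
  qed
  finally have le: "ennreal (\<Sum>s<S. \<sigma> / 2 ^ Suc s * r s) \<le> entropy_integral P F \<sigma>" .
  have nn: "0 \<le> (\<Sum>s<S. \<sigma> / 2 ^ Suc s * r s)" using r0 \<sigma> by (intro sum_nonneg) auto
  define T where "T = enn2real (entropy_integral P F \<sigma>)"
  have T: "entropy_integral P F \<sigma> = ennreal T"
    unfolding T_def using fin by (simp add: ennreal_enn2real_if)
  have T0: "T \<ge> 0" unfolding T_def by simp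
  have "ennreal (\<Sum>s<S. \<sigma> / 2 ^ Suc s * r s) \<le> ennreal T" using le T by simp
  then show ?thesis using T0 unfolding T_def[symmetric] by (simp add: ennreal_le_iff)
qed




lemma Max_abs_bound:
  fixes Z :: "'i \<Rightarrow> real"
  assumes "finite J" "J \<noteq> {}" "\<And>j. j \<in> J \<Longrightarrow> \<bar>Z j\<bar> \<le> K"
  shows "\<bar>Max (Z ` J)\<bar> \<le> K"
proof -
  have "Max (Z ` J) \<in> Z ` J" using assms by (intro Max_in) auto
  then show ?thesis using assms(3) by auto
qed

locale csetup = wsetup M P n w \<xi> for M :: "'b measure" and P :: "'a measure" and n w \<xi> +
  fixes F :: "('a \<Rightarrow> real) set" and f0 :: "'a \<Rightarrow> real" and \<sigma> sg :: real
  assumes F_count: "countable F" and F_ne: "F \<noteq> {}"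
    and F_meas: "\<And>f. f \<in> F \<Longrightarrow> f \<in> borel_measurable P"
    and F_range: "\<And>f z. f \<in> F \<Longrightarrow> z \<in> space P \<Longrightarrow> 0 \<le> f z \<and> f z \<le> 1"
    and f0_meas: "f0 \<in> borel_measurable P"
    and f0_range: "\<And>z. z \<in> space P \<Longrightarrow> 0 \<le> f0 z \<and> f0 z \<le> 1"
    and \<sigma>_pos: "\<sigma> > 0"
    and F_var: "\<And>f. f \<in> F \<Longrightarrow> (\<integral>z. \<bar>f z - f0 z\<bar> \<partial>P) \<le> \<sigma>\<^sup>2"
    and cond: "4 * entropy_integral P F \<sigma> \<le> ennreal (\<sigma>\<^sup>2 * sqrt (\<Sum>i<n. w i))"
    and sg: "\<bar>sg\<bar> = 1"
begin

definition "T = enn2real (entropy_integral P F \<sigma>)"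
definition "e s = \<sigma> / 2 ^ s"
definition "kk s = the_enat (sup_cover_num P F ((e s)\<^sup>2))"
definition "CC s = (SOME C. finite C \<and> C \<subseteq> F \<and> (\<forall>f\<in>F. \<exists>g\<in>C. \<forall>z\<in>space P. \<bar>f z - g z\<bar> \<le> (e s)\<^sup>2) \<and> card C = kk s)"
definition "H s = ln (real (kk s))"
definition "pr s f = (SOME g. g \<in> CC s \<and> (\<forall>z\<in>space P. \<bar>f z - g z\<bar> \<le> (e s)\<^sup>2))"
definition "hz g = (\<lambda>z. sg * (g z - f0 z))"
definition "lk s g = (\<lambda>z. sg * (g z - pr s g z))"
definition "MM t \<omega> = Max ((\<lambda>g. Zs (hz g) \<omega>) ` CC t)"
definition "LL t \<omega> = Max ((\<lambda>g. Zs (lk t g) \<omega>) ` CC (Suc t))"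

lemma phi_fin: "entropy_integral P F \<sigma> < \<infinity>"
proof (rule ccontr)
  assume "\<not> entropy_integral P F \<sigma> < \<infinity>"
  then have "entropy_integral P F \<sigma> = \<infinity>" by (simp add: not_less top_unique)
  then show False using cond by (simp add: ennreal_mult_top top_unique)
qed

lemma T_eq: "entropy_integral P F \<sigma> = ennreal T"
  unfolding T_def using phi_fin by (simp add: ennreal_enn2real_if)

lemma T_nonneg: "T \<ge> 0" unfolding T_def by simp

lemma T_cond: "4 * T \<le> \<sigma>\<^sup>2 * sqrt W"
proof -
  have "ennreal (4 * T) = 4 * entropy_integral P F \<sigma>" using T_eq T_nonneg by (simp add: ennreal_mult)
  also have "\<dots> \<le> ennreal (\<sigma>\<^sup>2 * sqrt W)" using cond by (simp add: W_def)
  finally show ?thesis using Wpos by (simp add: ennreal_le_iff)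
qed

lemma e_pos: "e s > 0" using \<sigma>_pos by (simp add: e_def)
lemma e_le: "e s \<le> \<sigma>" using \<sigma>_pos by (simp add: e_def divide_le_eq)
lemma e_Suc: "e s = 2 * e (Suc s)" by (simp add: e_def)

lemma scn_s: "sup_cover_num P F ((e s)\<^sup>2) = enat (kk s)"
proof -
  have "sup_cover_num P F ((e s)\<^sup>2) \<noteq> \<infinity>" by (rule scn_finite[OF phi_fin e_pos e_le])
  then show ?thesis unfolding kk_def by (cases "sup_cover_num P F ((e s)\<^sup>2)") auto
qed

lemma CC_props:
  "finite (CC s) \<and> CC s \<subseteq> F \<and> (\<forall>f\<in>F. \<exists>g\<in>CC s. \<forall>z\<in>space P. \<bar>f z - g z\<bar> \<le> (e s)\<^sup>2) \<and> card (CC s) = kk s"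
  unfolding CC_def by (rule someI_ex) (rule scn_attained[OF scn_s])

lemma CC_fin: "finite (CC s)" using CC_props by blast
lemma CC_sub: "CC s \<subseteq> F" using CC_props by blast
lemma CC_card: "card (CC s) = kk s" using CC_props by blast
lemma CC_ne: "CC s \<noteq> {}"
proof -
  obtain f where "f \<in> F" using F_ne by auto
  then show ?thesis using CC_props[of s] by auto
qed

lemma H_nonneg: "H s \<ge> 0"
  unfolding H_def by (cases "kk s") auto

lemma H_card: "H s = ln (real (card (CC s)))" unfolding H_def CC_card ..

lemma slc_s: "sqrt_log_cover P F ((e s)\<^sup>2) = ennreal (sqrt (H s))"
  unfolding sqrt_log_cover_def scn_s H_def by simp

lemma entropy_bound: "(\<Sum>s<S. e s / 2 * sqrt (H s)) \<le> T"
proof -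
  have "(\<Sum>s<S. \<sigma> / 2 ^ Suc s * sqrt (H s)) \<le> T"
    unfolding T_def
    by (rule entropy_sum[OF phi_fin \<sigma>_pos]) (use slc_s H_nonneg in \<open>auto simp: e_def\<close>)
  then show ?thesis by (simp add: e_def mult_ac)
qed

lemma pr_props:
  assumes "f \<in> F"
  shows "pr s f \<in> CC s \<and> (\<forall>z\<in>space P. \<bar>f z - pr s f z\<bar> \<le> (e s)\<^sup>2)"
  unfolding pr_def
  by (rule someI_ex[where P="\<lambda>g. g \<in> CC s \<and> (\<forall>z\<in>space P. \<bar>f z - g z\<bar> \<le> (e s)\<^sup>2)"]) (use CC_props assms in blast)

lemma pr_F: "f \<in> F \<Longrightarrow> pr s f \<in> F" using pr_props CC_sub by blast

lemma hz_meas: "g \<in> F \<Longrightarrow> hz g \<in> borel_measurable P"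
  unfolding hz_def using F_meas f0_meas by measurable

lemma hz_bnd: "g \<in> F \<Longrightarrow> z \<in> space P \<Longrightarrow> \<bar>hz g z\<bar> \<le> 1"
  unfolding hz_def using F_range[of g z] f0_range[of z] sg by (simp add: abs_mult abs_le_iff)

lemma lk_meas: "g \<in> F \<Longrightarrow> lk s g \<in> borel_measurable P"
  unfolding lk_def using F_meas pr_F by measurable

lemma lk_bnd:
  assumes "g \<in> F" "z \<in> space P"
  shows "\<bar>lk s g z\<bar> \<le> e s"
proof -
  have a: "\<bar>g z - pr s g z\<bar> \<le> (e s)\<^sup>2" using pr_props[OF assms(1)] assms(2) by blast
  have b: "\<bar>g z - pr s g z\<bar> \<le> 1" using F_range[OF assms(1,2)] F_range[OF pr_F[OF assms(1), of s] assms(2)] by (simp add: abs_le_iff)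
  have "\<bar>g z - pr s g z\<bar> \<le> e s"
  proof (cases "e s \<le> 1")
    case True
    then have "(e s)\<^sup>2 \<le> e s" using e_pos[of s] by (simp add: power2_eq_square mult_left_le)
    then show ?thesis using a by linarith
  next
    case False
    then show ?thesis using b by linarith
  qed
  then show ?thesis unfolding lk_def using sg by (simp add: abs_mult)
qed

lemma P_int:
  fixes f :: "'a \<Rightarrow> real" and B :: real
  assumes "f \<in> borel_measurable P" "\<And>z. z \<in> space P \<Longrightarrow> \<bar>f z\<bar> \<le> B"
  shows "integrable P f"
proof -
  interpret P: prob_space P by (rule P_prob)
  show ?thesis by (rule P.integrable_const_bound[where B=B]) (use assms in auto)
qed

lemma Zs_hz_bnd:
  assumes g: "g \<in> F" and \<omega>: "\<omega> \<in> space M"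
  shows "\<bar>Zs (hz g) \<omega>\<bar> \<le> 2 * W"
  using Zs_bnd[OF hz_meas[OF g] hz_bnd[OF g] \<omega>] by simp

lemma Zs_lk_bnd:
  assumes g: "g \<in> F" and \<omega>: "\<omega> \<in> space M"
  shows "\<bar>Zs (lk t g) \<omega>\<bar> \<le> 2 * e t * W"
  by (rule Zs_bnd[OF lk_meas[OF g] lk_bnd[OF g] \<omega>])

lemma MM_meas: "MM t \<in> borel_measurable M"
  unfolding MM_def by (intro borel_measurable_Max CC_fin Zs_meas hz_meas) (use CC_sub in auto)

lemma MM_bnd: "\<omega> \<in> space M \<Longrightarrow> \<bar>MM t \<omega>\<bar> \<le> 2 * W"
  unfolding MM_def by (intro Max_abs_bound CC_fin CC_ne) (use CC_sub Zs_hz_bnd in auto)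

lemma LL_meas: "LL t \<in> borel_measurable M"
  unfolding LL_def by (intro borel_measurable_Max CC_fin Zs_meas lk_meas) (use CC_sub in auto)

lemma LL_bnd: "\<omega> \<in> space M \<Longrightarrow> \<bar>LL t \<omega>\<bar> \<le> 2 * e t * W"
  unfolding LL_def
proof (intro Max_abs_bound CC_fin CC_ne)
  fix g assume "\<omega> \<in> space M" "g \<in> CC (Suc t)"
  then show "\<bar>Zs (lk t g) \<omega>\<bar> \<le> 2 * e t * W" using CC_sub Zs_lk_bnd by blast
qed

lemma chain_step:
  assumes "\<omega> \<in> space M"
  shows "MM (Suc t) \<omega> \<le> MM t \<omega> + LL t \<omega>"
  unfolding MM_def[of "Suc t"]
proof (rule Max.boundedI)
  show "finite ((\<lambda>g. Zs (hz g) \<omega>) ` CC (Suc t))" using CC_fin by simp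
  show "(\<lambda>g. Zs (hz g) \<omega>) ` CC (Suc t) \<noteq> {}" using CC_ne by simp
  fix x assume "x \<in> (\<lambda>g. Zs (hz g) \<omega>) ` CC (Suc t)"
  then obtain g where g: "g \<in> CC (Suc t)" "x = Zs (hz g) \<omega>" by auto
  have gF: "g \<in> F" using g CC_sub by auto
  have eq: "hz g = (\<lambda>z. hz (pr t g) z + lk t g z)"
    unfolding hz_def lk_def by (rule ext) (simp add: algebra_simps)
  have "x = Zs (hz (pr t g)) \<omega> + Zs (lk t g) \<omega>"
    unfolding g(2) eq
    by (rule Zs_add) (auto intro!: P_int hz_meas lk_meas hz_bnd lk_bnd gF pr_F)
  also have "Zs (hz (pr t g)) \<omega> \<le> MM t \<omega>"
    unfolding MM_def using pr_props[OF gF, of t] CC_fin by (intro Max_ge) auto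
  also have "Zs (lk t g) \<omega> \<le> LL t \<omega>"
    unfolding LL_def using g CC_fin by (intro Max_ge) auto
  finally show "x \<le> MM t \<omega> + LL t \<omega>" by simp
qed

lemma chain:
  assumes "\<omega> \<in> space M"
  shows "MM S \<omega> \<le> MM 0 \<omega> + (\<Sum>t<S. LL t \<omega>)"
proof (induction S)
  case (Suc S)
  then show ?case using chain_step[OF assms, of S] by simp
qed simp

lemma final_pt:
  assumes f: "f \<in> F" and \<omega>: "\<omega> \<in> space M"
  shows "Zs (hz f) \<omega> \<le> MM S \<omega> + 2 * (e S)\<^sup>2 * W"
proof -
  define d where "d = (\<lambda>z. sg * (f z - pr S f z))"
  have eq: "hz f = (\<lambda>z. hz (pr S f) z + d z)"
    unfolding hz_def d_def by (rule ext) (simp add: algebra_simps)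
  have dm: "d \<in> borel_measurable P" unfolding d_def using F_meas f pr_F by measurable
  have db: "\<bar>d z\<bar> \<le> (e S)\<^sup>2" if "z \<in> space P" for z
    using pr_props[OF f, of S] that sg unfolding d_def by (simp add: abs_mult)
  have "Zs (hz f) \<omega> = Zs (hz (pr S f)) \<omega> + Zs d \<omega>"
    unfolding eq by (rule Zs_add) (auto intro!: P_int hz_meas hz_bnd f pr_F dm db)
  also have "Zs (hz (pr S f)) \<omega> \<le> MM S \<omega>"
    unfolding MM_def using pr_props[OF f, of S] CC_fin by (intro Max_ge) auto
  also have "Zs d \<omega> \<le> 2 * (e S)\<^sup>2 * W"
    using Zs_bnd[OF dm db \<omega>] by linarith
  finally show ?thesis by simp
qed

end




lemma limit_arg:
  fixes Y c d :: real
  assumes d: "d \<ge> 0" and le: "\<And>S::nat. Y \<le> c + d * (1/4) ^ S"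
  shows "Y \<le> c"
proof (rule ccontr)
  assume "\<not> Y \<le> c"
  then have p: "Y - c > 0" by simp
  obtain S where S: "(1/4::real) ^ S < (Y - c) / (d + 1)"
    using real_arch_pow_inv[of "(Y - c) / (d + 1)" "1/4"] p d by auto
  have "d * (1/4) ^ S \<le> (d + 1) * (1/4) ^ S" by (intro mult_right_mono) auto
  also have "\<dots> < (d + 1) * ((Y - c) / (d + 1))" using S d by (intro mult_strict_left_mono) auto
  also have "\<dots> = Y - c" using d by simp
  finally show False using le[of S] by simp
qed

context csetup
begin

lemma H0_small: "H 0 \<le> \<sigma>\<^sup>2 * W"
proof -
  have "(\<Sum>s<1. e s / 2 * sqrt (H s)) \<le> T" by (rule entropy_bound)
  then have a: "\<sigma> / 2 * sqrt (H 0) \<le> T" by (simp add: e_def)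
  have "\<sigma> * sqrt (H 0) \<le> \<sigma> * (\<sigma> * sqrt W / 2)" using a T_cond by (simp add: power2_eq_square)
  then have b: "sqrt (H 0) \<le> \<sigma> * sqrt W / 2" using \<sigma>_pos by simp
  have "H 0 = (sqrt (H 0))\<^sup>2" using H_nonneg[of 0] by simp
  also have "\<dots> \<le> (\<sigma> * sqrt W / 2)\<^sup>2" by (rule power_mono[OF b]) (use H_nonneg[of 0] in simp)
  also have "\<dots> = \<sigma>\<^sup>2 * W / 4" using Wpos by (simp add: power2_eq_square)
  also have "\<dots> \<le> \<sigma>\<^sup>2 * W" using Wpos by simp
  finally show ?thesis .
qed

lemma sq_hz_le:
  assumes g: "g \<in> F"
  shows "(\<integral>z. (hz g z)\<^sup>2 \<partial>P) \<le> \<sigma>\<^sup>2"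
proof -
  interpret P: prob_space P by (rule P_prob)
  have "(\<integral>z. (hz g z)\<^sup>2 \<partial>P) \<le> (\<integral>z. \<bar>g z - f0 z\<bar> \<partial>P)"
  proof (rule integral_mono)
    show "integrable P (\<lambda>z. (hz g z)\<^sup>2)"
      by (rule P_int[where B=1]) (use hz_meas[OF g] hz_bnd[OF g] in \<open>auto simp: abs_square_le_1\<close>)
    show "integrable P (\<lambda>z. \<bar>g z - f0 z\<bar>)"
    proof (rule P_int[where B=1])
      show "(\<lambda>z. \<bar>g z - f0 z\<bar>) \<in> borel_measurable P" using F_meas[OF g] f0_meas by measurable
      fix z assume z: "z \<in> space P"
      show "\<bar>\<bar>g z - f0 z\<bar>\<bar> \<le> 1" using F_range[OF g z] f0_range[OF z] by (simp add: abs_le_iff)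
    qed
    fix z assume z: "z \<in> space P"
    have x1: "\<bar>g z - f0 z\<bar> \<le> 1" using F_range[OF g z] f0_range[OF z] by (simp add: abs_le_iff)
    have a: "\<bar>hz g z\<bar> = \<bar>g z - f0 z\<bar>" unfolding hz_def using sg by (simp add: abs_mult)
    have "(hz g z)\<^sup>2 = \<bar>hz g z\<bar> * \<bar>hz g z\<bar>" by (simp add: power2_eq_square abs_mult_self_eq)
    also have "\<dots> = \<bar>g z - f0 z\<bar> * \<bar>g z - f0 z\<bar>" using a by simp
    also have "\<dots> \<le> \<bar>g z - f0 z\<bar>" by (rule mult_left_le[OF x1]) simp
    finally show "(hz g z)\<^sup>2 \<le> \<bar>g z - f0 z\<bar>" .
  qed
  also have "\<dots> \<le> \<sigma>\<^sup>2" by (rule F_var[OF g])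
  finally show ?thesis .
qed

lemma EM0: "(\<integral>\<omega>. MM 0 \<omega> \<partial>M) \<le> 2 * sqrt (H 0 * (\<sigma>\<^sup>2 * W))"
proof -
  interpret P: prob_space P by (rule P_prob)
  have "(\<integral>\<omega>. Max ((\<lambda>g. Zs (hz g) \<omega>) ` CC 0) \<partial>M) \<le> 2 * sqrt (ln (card (CC 0)) * (\<sigma>\<^sup>2 * W))"
  proof (rule max_ineq2[where K="2 * W" and \<Lambda>=1])
    show "finite (CC 0)" "CC 0 \<noteq> {}" by (rule CC_fin, rule CC_ne)
    show "Zs (hz g) \<in> borel_measurable M" if "g \<in> CC 0" for g
      using that CC_sub by (intro Zs_meas hz_meas) auto
    show "\<bar>Zs (hz g) \<omega>\<bar> \<le> 2 * W" if "g \<in> CC 0" "\<omega> \<in> space M" for g \<omega>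
      using that CC_sub Zs_hz_bnd by blast
    show "0 < \<sigma>\<^sup>2 * W" using \<sigma>_pos Wpos by simp
    show "(0::real) < 1" by simp
    have "ln (card (CC 0)) / (\<sigma>\<^sup>2 * W) \<le> 1"
      using H0_small \<sigma>_pos Wpos unfolding H_card by simp
    then show "sqrt (ln (card (CC 0)) / (\<sigma>\<^sup>2 * W)) \<le> 1" by simp
    fix l :: real and g assume l: "0 < l" "l \<le> 1" and g: "g \<in> CC 0"
    have gF: "g \<in> F" using g CC_sub by auto
    have "(\<integral>\<omega>. exp (l * Zs (hz g) \<omega>) \<partial>M) \<le> exp (\<Sum>i<n. l\<^sup>2 * w i * \<sigma>\<^sup>2)"
    proof (rule Zs_mgf[OF hz_meas[OF gF] hz_bnd[OF gF]])
      fix i assume i: "i < n"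
      show "(\<integral>\<^sup>+z. ennreal (exp (l * (w i * (hz g z - (\<integral>z. hz g z \<partial>P))))) \<partial>P) \<le> ennreal (exp (l\<^sup>2 * w i * \<sigma>\<^sup>2))"
        by (rule P.quad_i[OF hz_meas[OF gF] hz_bnd[OF gF] sq_hz_le[OF gF]]) (use w01[OF i] l in auto)
    qed
    also have "(\<Sum>i<n. l\<^sup>2 * w i * \<sigma>\<^sup>2) = l\<^sup>2 * (\<sigma>\<^sup>2 * W)"
      unfolding W_def by (simp add: sum_distrib_left sum_distrib_right mult_ac)
    finally show "(\<integral>\<omega>. exp (l * Zs (hz g) \<omega>) \<partial>M) \<le> exp (l\<^sup>2 * (\<sigma>\<^sup>2 * W))" .
  qed
  then show ?thesis unfolding MM_def H_card .
qed

lemma EL: "(\<integral>\<omega>. LL t \<omega> \<partial>M) \<le> 2 * sqrt (H (Suc t) * ((e t)\<^sup>2 * W / 2))"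
proof -
  interpret P: prob_space P by (rule P_prob)
  define A where "A = (e t)\<^sup>2 * W / 2"
  have Apos: "A > 0" unfolding A_def using e_pos[of t] Wpos by simp
  have "(\<integral>\<omega>. Max ((\<lambda>g. Zs (lk t g) \<omega>) ` CC (Suc t)) \<partial>M) \<le> 2 * sqrt (ln (card (CC (Suc t))) * A)"
  proof (rule max_ineq2[where K="2 * e t * W" and \<Lambda>="sqrt (ln (card (CC (Suc t))) / A) + 1"])
    show "finite (CC (Suc t))" "CC (Suc t) \<noteq> {}" by (rule CC_fin, rule CC_ne)
    show "Zs (lk t g) \<in> borel_measurable M" if "g \<in> CC (Suc t)" for g
      using that CC_sub by (intro Zs_meas lk_meas) auto
    show "\<bar>Zs (lk t g) \<omega>\<bar> \<le> 2 * e t * W" if "g \<in> CC (Suc t)" "\<omega> \<in> space M" for g \<omega>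
      using that CC_sub Zs_lk_bnd by blast
    show "0 < A" by (rule Apos)
    have "0 \<le> ln (card (CC (Suc t))) / A" using H_nonneg[of "Suc t"] Apos unfolding H_card by simp
    then show "0 < sqrt (ln (card (CC (Suc t))) / A) + 1" by (simp add: add_nonneg_pos)
    show "sqrt (ln (card (CC (Suc t))) / A) \<le> sqrt (ln (card (CC (Suc t))) / A) + 1" by simp
    fix l :: real and g assume l: "0 < l" and g: "g \<in> CC (Suc t)"
    have gF: "g \<in> F" using g CC_sub by auto
    have "(\<integral>\<omega>. exp (l * Zs (lk t g) \<omega>) \<partial>M) \<le> exp (\<Sum>i<n. l\<^sup>2 * w i * (e t)\<^sup>2 / 2)"
    proof (rule Zs_mgf[OF lk_meas[OF gF] lk_bnd[OF gF]])
      fix i assume i: "i < n"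
      show "(\<integral>\<^sup>+z. ennreal (exp (l * (w i * (lk t g z - (\<integral>z. lk t g z \<partial>P))))) \<partial>P) \<le> ennreal (exp (l\<^sup>2 * w i * (e t)\<^sup>2 / 2))"
        by (rule P.hoeff_i[OF lk_meas[OF gF] lk_bnd[OF gF]]) (use w01[OF i] l in auto)
    qed
    also have "(\<Sum>i<n. l\<^sup>2 * w i * (e t)\<^sup>2 / 2) = l\<^sup>2 * A"
      unfolding W_def A_def by (simp add: sum_distrib_left sum_distrib_right sum_divide_distrib mult_ac)
    finally show "(\<integral>\<omega>. exp (l * Zs (lk t g) \<omega>) \<partial>M) \<le> exp (l\<^sup>2 * A)" .
  qed
  then show ?thesis unfolding LL_def H_card A_def .
qed

end




context csetup
begin

lemma v_meas:
  assumes "f \<in> F"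
  shows "(\<lambda>\<omega>. v_w P n w \<xi> (hz f) \<omega>) \<in> borel_measurable M"
proof -
  have "Zs (hz f) \<in> borel_measurable M" by (rule Zs_meas[OF hz_meas[OF assms]])
  then show ?thesis unfolding v_eq by (intro borel_measurable_divide) auto
qed

lemma v_bnd:
  assumes "f \<in> F" "\<omega> \<in> space M"
  shows "\<bar>v_w P n w \<xi> (hz f) \<omega>\<bar> \<le> 2"
proof -
  have "\<bar>Zs (hz f) \<omega>\<bar> \<le> 2 * W" by (rule Zs_hz_bnd[OF assms])
  have "\<bar>Zs (hz f) \<omega> / W\<bar> = \<bar>Zs (hz f) \<omega>\<bar> / W" by (simp only: abs_div_pos[OF Wpos])
  also have "\<dots> \<le> (2 * W) / W" by (rule divide_right_mono) (use \<open>\<bar>Zs (hz f) \<omega>\<bar> \<le> 2 * W\<close> Wpos in auto)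
  also have "\<dots> = 2" using Wpos by simp
  finally show ?thesis unfolding v_eq .
qed

lemma e_sq: "(e S)\<^sup>2 = \<sigma>\<^sup>2 * (1/4) ^ S"
proof -
  have h: "((1/2::real) * (1/2)) ^ S = (1/2) ^ S * (1/2) ^ S" by (rule power_mult_distrib)
  have q: "(1/2::real) * (1/2) = 1/4" by simp
  have e: "e S = \<sigma> * (1/2) ^ S" unfolding e_def by (simp add: power_one_over)
  have "(e S)\<^sup>2 = \<sigma>\<^sup>2 * ((1/2) ^ S * (1/2) ^ S)" unfolding e by (simp add: power2_eq_square mult_ac)
  also have "\<dots> = \<sigma>\<^sup>2 * (1/4) ^ S" using h q by simp
  finally show ?thesis .
qed

lemma sqrt2_le: "sqrt 2 \<le> 3 / 2"
proof (rule ccontr)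
  assume "\<not> sqrt 2 \<le> 3 / 2"
  then have a: "3 / 2 < sqrt 2" by simp
  have "(3/2) * (3/2) < sqrt 2 * sqrt 2" by (rule mult_strict_mono[OF a a]) auto
  then show False by simp
qed

lemma core: "sqrt W * (\<integral>\<omega>. (SUP f\<in>F. v_w P n w \<xi> (hz f) \<omega>) \<partial>M) \<le> 6 * T"
proof -
  define Sf where "Sf = (\<lambda>\<omega>. SUP f\<in>F. v_w P n w \<xi> (hz f) \<omega>)"
  define X where "X = (\<integral>\<omega>. Sf \<omega> \<partial>M)"
  have bdd: "bdd_above ((\<lambda>f. v_w P n w \<xi> (hz f) \<omega>) ` F)" if "\<omega> \<in> space M" for \<omega>
    by (rule bdd_aboveI2[where M=2]) (use v_bnd that in \<open>auto simp: abs_le_iff\<close>)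
  have Sm: "Sf \<in> borel_measurable M"
    unfolding Sf_def by (rule borel_measurable_cSUP[OF F_count v_meas bdd])
  obtain f1 where f1: "f1 \<in> F" using F_ne by auto
  have Sb: "\<bar>Sf \<omega>\<bar> \<le> 2" if \<omega>: "\<omega> \<in> space M" for \<omega>
  proof -
    have "Sf \<omega> \<le> 2" unfolding Sf_def
      by (rule cSUP_least[OF F_ne]) (use v_bnd \<omega> in \<open>auto simp: abs_le_iff\<close>)
    moreover have "v_w P n w \<xi> (hz f1) \<omega> \<le> Sf \<omega>" unfolding Sf_def
      by (rule cSUP_upper[OF f1 bdd[OF \<omega>]])
    moreover have "- 2 \<le> v_w P n w \<xi> (hz f1) \<omega>" using v_bnd[OF f1 \<omega>] by (simp add: abs_le_iff)
    ultimately show ?thesis by (simp add: abs_le_iff)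
  qed
  have Sint: "integrable M Sf" by (rule integrable_const_bound[where B=2]) (use Sb Sm in auto)
  have MMint: "integrable M (MM t)" for t
    by (rule integrable_const_bound[where B="2 * W"]) (use MM_bnd MM_meas in auto)
  have LLint: "integrable M (LL t)" for t
    by (rule integrable_const_bound[where B="2 * e t * W"]) (use LL_bnd LL_meas in auto)
  define a where "a = (\<lambda>s. e s * sqrt (H s))"
  have a0: "a s \<ge> 0" for s unfolding a_def using e_pos[of s] H_nonneg[of s] by simp
  have bound: "sqrt W * X \<le> 6 * T + (2 * \<sigma>\<^sup>2 * sqrt W) * (1/4) ^ S" for S
  proof -
    have pt: "Sf \<omega> \<le> (MM 0 \<omega> + (\<Sum>t<S. LL t \<omega>) + 2 * (e S)\<^sup>2 * W) / W" if \<omega>: "\<omega> \<in> space M" for \<omega>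
      unfolding Sf_def
    proof (rule cSUP_least[OF F_ne])
      fix f assume f: "f \<in> F"
      have "Zs (hz f) \<omega> \<le> MM 0 \<omega> + (\<Sum>t<S. LL t \<omega>) + 2 * (e S)\<^sup>2 * W"
        using final_pt[OF f \<omega>, of S] chain[OF \<omega>, of S] by linarith
      then show "v_w P n w \<xi> (hz f) \<omega> \<le> (MM 0 \<omega> + (\<Sum>t<S. LL t \<omega>) + 2 * (e S)\<^sup>2 * W) / W"
        unfolding v_eq using Wpos by (simp add: divide_right_mono)
    qed
    have "X \<le> (\<integral>\<omega>. (MM 0 \<omega> + (\<Sum>t<S. LL t \<omega>) + 2 * (e S)\<^sup>2 * W) / W \<partial>M)"
      unfolding X_def by (rule integral_mono[OF Sint _ pt]) (use MMint LLint in auto)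
    also have "\<dots> = ((\<integral>\<omega>. MM 0 \<omega> \<partial>M) + (\<Sum>t<S. (\<integral>\<omega>. LL t \<omega> \<partial>M)) + 2 * (e S)\<^sup>2 * W) / W"
      using MMint LLint by (simp add: integral_sum prob_space)
    finally have "W * X \<le> (\<integral>\<omega>. MM 0 \<omega> \<partial>M) + (\<Sum>t<S. (\<integral>\<omega>. LL t \<omega> \<partial>M)) + 2 * (e S)\<^sup>2 * W"
      using Wpos by (simp add: field_simps)
    also have "\<dots> \<le> 2 * sqrt (H 0 * (\<sigma>\<^sup>2 * W)) + (\<Sum>t<S. 2 * sqrt (H (Suc t) * ((e t)\<^sup>2 * W / 2))) + 2 * (e S)\<^sup>2 * W"
      using EM0 EL by (intro add_mono sum_mono order_refl) auto
    also have "sqrt (H 0 * (\<sigma>\<^sup>2 * W)) = a 0 * sqrt W"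
      unfolding a_def using \<sigma>_pos by (simp add: e_def real_sqrt_mult)
    also have "(\<Sum>t<S. 2 * sqrt (H (Suc t) * ((e t)\<^sup>2 * W / 2))) = (\<Sum>t<S. (2 * sqrt 2 * sqrt W) * a (Suc t))"
    proof (rule sum.cong[OF refl])
      fix t
      have "H (Suc t) * ((e t)\<^sup>2 * W / 2) = 2 * (e (Suc t))\<^sup>2 * H (Suc t) * W"
        by (subst e_Suc) (simp add: power2_eq_square)
      then have "sqrt (H (Suc t) * ((e t)\<^sup>2 * W / 2)) = sqrt (2 * (e (Suc t))\<^sup>2 * H (Suc t) * W)"
        by (simp only:)
      also have "\<dots> = sqrt 2 * e (Suc t) * sqrt (H (Suc t)) * sqrt W"
        using e_pos[of "Suc t"] by (simp add: real_sqrt_mult)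
      finally have "sqrt (H (Suc t) * ((e t)\<^sup>2 * W / 2)) = sqrt 2 * e (Suc t) * sqrt (H (Suc t)) * sqrt W" .
      then show "2 * sqrt (H (Suc t) * ((e t)\<^sup>2 * W / 2)) = (2 * sqrt 2 * sqrt W) * a (Suc t)"
        unfolding a_def by (simp add: mult_ac)
    qed
    also have "(\<Sum>t<S. (2 * sqrt 2 * sqrt W) * a (Suc t)) = (2 * sqrt 2 * sqrt W) * (\<Sum>t<S. a (Suc t))"
      by (rule sum_distrib_left[symmetric])
    finally have WX0: "W * X \<le> 2 * (a 0 * sqrt W) + 2 * sqrt 2 * sqrt W * (\<Sum>t<S. a (Suc t)) + 2 * (e S)\<^sup>2 * W" .
    have eqR: "2 * (a 0 * sqrt W) + 2 * sqrt 2 * sqrt W * (\<Sum>t<S. a (Suc t)) = sqrt W * (2 * a 0 + 2 * sqrt 2 * (\<Sum>t<S. a (Suc t)))"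
      by (simp only: distrib_left mult_ac)
    have WX: "W * X \<le> sqrt W * (2 * a 0 + 2 * sqrt 2 * (\<Sum>t<S. a (Suc t))) + 2 * (e S)\<^sup>2 * W"
      using WX0 unfolding eqR .
    have Wsq: "W = sqrt W * sqrt W" using Wpos by simp
    have sWp: "sqrt W > 0" using Wpos by simp
    have ss: "sqrt W * sqrt W = W" using Wpos by simp
    have l1: "sqrt W * (sqrt W * X) = W * X" using ss by (simp add: mult.assoc[symmetric])
    have l2: "sqrt W * ((2 * a 0 + 2 * sqrt 2 * (\<Sum>t<S. a (Suc t))) + 2 * (e S)\<^sup>2 * sqrt W)
        = sqrt W * (2 * a 0 + 2 * sqrt 2 * (\<Sum>t<S. a (Suc t))) + 2 * (e S)\<^sup>2 * (sqrt W * sqrt W)"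
      by (simp add: algebra_simps)
    have "sqrt W * (sqrt W * X) \<le> sqrt W * ((2 * a 0 + 2 * sqrt 2 * (\<Sum>t<S. a (Suc t))) + 2 * (e S)\<^sup>2 * sqrt W)"
      unfolding l1 l2 ss using WX by simp
    then have "sqrt W * X \<le> 2 * a 0 + 2 * sqrt 2 * (\<Sum>t<S. a (Suc t)) + 2 * (e S)\<^sup>2 * sqrt W"
      using sWp by simp
    also have "2 * a 0 \<le> 2 * sqrt 2 * a 0"
    proof -
      have s1: "1 \<le> sqrt 2" by simp
      show ?thesis using mult_right_mono[OF s1 a0[of 0]] by simp
    qed
    also have "2 * sqrt 2 * a 0 + 2 * sqrt 2 * (\<Sum>t<S. a (Suc t)) = 2 * sqrt 2 * (\<Sum>s<Suc S. a s)"
      by (simp only: sum.lessThan_Suc_shift distrib_left)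
    also have "(\<Sum>s<Suc S. a s) = 2 * (\<Sum>s<Suc S. e s / 2 * sqrt (H s))"
      unfolding a_def by (simp add: sum_distrib_left)
    also have "\<dots> \<le> 2 * T" using entropy_bound[of "Suc S"] by simp
    finally have "sqrt W * X \<le> 2 * sqrt 2 * (2 * T) + 2 * (e S)\<^sup>2 * sqrt W" by simp
    also have "2 * sqrt 2 * (2 * T) \<le> 6 * T"
    proof -
      have "2 * sqrt 2 * (2 * T) = (4 * T) * sqrt 2" by simp
      also have "\<dots> \<le> (4 * T) * (3 / 2)" using sqrt2_le T_nonneg by (intro mult_left_mono) auto
      finally show ?thesis by simp
    qed
    finally have fin: "sqrt W * X \<le> 6 * T + 2 * (e S)\<^sup>2 * sqrt W" by simp
    have "2 * (e S)\<^sup>2 * sqrt W = (2 * \<sigma>\<^sup>2 * sqrt W) * (1/4) ^ S" unfolding e_sq by (simp only: mult_ac)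
    then show ?thesis using fin by linarith
  qed
  have "sqrt W * X \<le> 6 * T"
    by (rule limit_arg[OF _ bound]) (use Wpos in simp)
  then show ?thesis unfolding X_def Sf_def .
qed

end



theorem mainTheorem8:
  fixes M :: "'b measure" and P :: "'a measure"
    and n :: nat and w :: "nat \<Rightarrow> real" and \<xi> :: "nat \<Rightarrow> 'b \<Rightarrow> 'a"
    and F :: "('a \<Rightarrow> real) set" and f0 :: "'a \<Rightarrow> real" and \<sigma> :: real
  assumes M: "prob_space M"
    and \<xi>_meas: "\<And>i. i < n \<Longrightarrow> \<xi> i \<in> measurable M P"
    and \<xi>_indep: "prob_space.indep_vars M (\<lambda>_. P) \<xi> {..<n}"
    and \<xi>_law: "\<And>i. i < n \<Longrightarrow> distr M P (\<xi> i) = P"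
    and w01: "\<And>i. i < n \<Longrightarrow> 0 \<le> w i \<and> w i \<le> 1"
    and wpos: "(\<Sum>i<n. w i) > 0"
    and F_count: "countable F"
    and F_ne: "F \<noteq> {}"
    and F_meas: "\<And>f. f \<in> F \<Longrightarrow> f \<in> borel_measurable P"
    and F_range: "\<And>f z. f \<in> F \<Longrightarrow> z \<in> space P \<Longrightarrow> 0 \<le> f z \<and> f z \<le> 1"
    and f0_meas: "f0 \<in> borel_measurable P"
    and f0_range: "\<And>z. z \<in> space P \<Longrightarrow> 0 \<le> f0 z \<and> f0 z \<le> 1"
    and \<sigma>_pos: "\<sigma> > 0"
    and F_var: "\<And>f. f \<in> F \<Longrightarrow> (\<integral>z. \<bar>f z - f0 z\<bar> \<partial>P) \<le> \<sigma>\<^sup>2"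
    and cond: "4 * entropy_integral P F \<sigma> \<le> ennreal (\<sigma>\<^sup>2 * sqrt (\<Sum>i<n. w i))"
  shows "sqrt (\<Sum>i<n. w i) *
           max (\<integral>\<omega>. (SUP f\<in>F. v_w P n w \<xi> (\<lambda>z. f0 z - f z) \<omega>) \<partial>M)
               (\<integral>\<omega>. (SUP f\<in>F. v_w P n w \<xi> (\<lambda>z. f z - f0 z) \<omega>) \<partial>M)
         \<le> 12 * enn2real (entropy_integral P F \<sigma>)"
proof -
  have ws: "wsetup M P n w \<xi>" by (rule wsetup.intro) (use assms in auto)
  interpret cp: csetup M P n w \<xi> F f0 \<sigma> 1
    by (intro csetup.intro ws csetup_axioms.intro) (use assms in auto)
  interpret cm: csetup M P n w \<xi> F f0 \<sigma> "-1"
    by (intro csetup.intro ws csetup_axioms.intro) (use assms in auto)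
  have hp: "cp.hz f = (\<lambda>z. f z - f0 z)" for f by (simp add: cp.hz_def)
  have hm: "cm.hz f = (\<lambda>z. f0 z - f z)" for f by (simp add: cm.hz_def fun_eq_iff)
  define T where "T = enn2real (entropy_integral P F \<sigma>)"
  have T0: "T \<ge> 0" unfolding T_def by simp
  have A: "sqrt (\<Sum>i<n. w i) * (\<integral>\<omega>. (SUP f\<in>F. v_w P n w \<xi> (\<lambda>z. f z - f0 z) \<omega>) \<partial>M) \<le> 6 * T"
    using cp.core unfolding hp cp.W_def cp.T_def T_def .
  have B: "sqrt (\<Sum>i<n. w i) * (\<integral>\<omega>. (SUP f\<in>F. v_w P n w \<xi> (\<lambda>z. f0 z - f z) \<omega>) \<partial>M) \<le> 6 * T"
    using cm.core unfolding hm cp.W_def cm.T_def T_def .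
  show ?thesis unfolding T_def[symmetric] using A B T0 by (simp add: max_def)
qed

end
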